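(* Let $T \subseteq R$ and let $b = \pi_T x \in \mathbb{Z}/m\mathbb{Z}$ where $\pi_T = \prod_{i \in T} p_i$ and $x$ is an integer with $\gcd(x, m/g_T) = 1$. Let $e$ be an integer with $e \ge \max(e_1,\dots,e_r)$ and $e \ge 1$. Then $$b^e \equiv \sum_{i \in R\setminus T} d_{R\setminus\{i\}}\; b^{\,e \bmod \varphi(p_i^{e_i})} \pmod{m},$$ where $e \bmod \varphi(p_i^{e_i})$ denotes the least nonnegative residue and $b^0$ is interpreted as $1$ (so that $d_{R\setminus\{i\}} b^0 = d_{R\setminus\{i\}}$).
   Context: Let $m = p_1^{e_1}\cdots p_r^{e_r}$ with $r \ge 1$, distinct primes $p_1,\dots,p_r$ and exponents $e_i \ge 1$, and let $R=\{1,\dots,r\}$. For $I \subseteq R$, $g_I = \prod_{i\in I} p_i^{e_i}$ and $d_I$ denotes the idempotent of $\mathbb{Z}/m\mathbb{Z}$ determined by $I$: the unique residue class modulo $m$ with $d_I \equiv 0 \pmod{p_i^{e_i}}$ for all $i \in I$ and $d_I \equiv 1 \pmod{p_i^{e_i}}$ for all $i \in R\setminus I$. $\varphi$ is Euler's totient function. (An empty sum is $0$.) *)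

theory Defs
  imports "HOL-Number_Theory.Number_Theory"
begin

text \<open>Setting: m = prod of p i ^ ex i over i in {1..r}, distinct primes p i, ex i >= 1.
  The idempotent d_I of Z/mZ is represented by its least nonnegative representative.\<close>

definition modulus :: "(nat \<Rightarrow> nat) \<Rightarrow> (nat \<Rightarrow> nat) \<Rightarrow> nat \<Rightarrow> nat" where
  "modulus p ex r = (\<Prod>i\<in>{1..r}. p i ^ ex i)"

definition idem :: "(nat \<Rightarrow> nat) \<Rightarrow> (nat \<Rightarrow> nat) \<Rightarrow> nat \<Rightarrow> nat set \<Rightarrow> int" where
  "idem p ex r I = (THE d::int. 0 \<le> d \<and> d < int (modulus p ex r) \<and>
      (\<forall>i\<in>I. [d = 0] (mod int (p i ^ ex i))) \<and>
      (\<forall>i\<in>{1..r} - I. [d = 1] (mod int (p i ^ ex i))))"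

end

theory Submission
  imports Defs
begin

lemma coprime_pp:
  assumes "\<forall>i\<in>{1..r}. prime (p i)" "inj_on p {1..(r::nat)}"
  shows "\<forall>i\<in>{1..r}. \<forall>j\<in>{1..r}. i \<noteq> j \<longrightarrow> coprime ((p::nat\<Rightarrow>nat) i ^ ex i) (p j ^ ex j)"
proof (intro ballI impI)
  fix i j assume ij: "i \<in> {1..r}" "j \<in> {1..r}" "i \<noteq> j"
  then have "p i \<noteq> p j" using assms(2) by (meson inj_on_contraD)
  then have "coprime (p i) (p j)" using assms(1) ij by (simp add: primes_coprime)
  then show "coprime (p i ^ ex i) (p j ^ ex j)" by simp
qed

lemma idem_props:
  assumes "\<forall>i\<in>{1..r}. prime (p i)" "inj_on p {1..(r::nat)}" "I \<subseteq> {1..r}"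
  shows "(\<forall>i\<in>I. [idem p ex r I = 0] (mod int (p i ^ ex i))) \<and>
      (\<forall>i\<in>{1..r} - I. [idem p ex r I = 1] (mod int (p i ^ ex i)))"
proof -
  let ?P = "\<lambda>d::int. 0 \<le> d \<and> d < int (modulus p ex r) \<and>
      (\<forall>i\<in>I. [d = 0] (mod int (p i ^ ex i))) \<and>
      (\<forall>i\<in>{1..r} - I. [d = 1] (mod int (p i ^ ex i)))"
  have cop: "\<forall>i\<in>{1..r}. \<forall>j\<in>{1..r}. i \<noteq> j \<longrightarrow> coprime (p i ^ ex i) (p j ^ ex j)"
    using coprime_pp[OF assms(1,2)] by blast
  have nz: "\<forall>i\<in>{1..r}. p i ^ ex i \<noteq> 0" using assms(1) by (auto dest: prime_gt_0_nat)
  define u where "u i = (if i \<in> I then 0 else (1::nat))" for i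
  obtain y where y: "y < modulus p ex r" "\<forall>i\<in>{1..r}. [y = u i] (mod (p i ^ ex i))"
    and yu: "\<And>z. z < modulus p ex r \<Longrightarrow> (\<forall>i\<in>{1..r}. [z = u i] (mod (p i ^ ex i))) \<Longrightarrow> z = y"
    using chinese_remainder_unique_nat[of "{1..r}" "\<lambda>i. p i ^ ex i" u, OF _ nz cop]
    unfolding modulus_def by auto
  have "\<exists>!d. ?P d"
  proof
    show "?P (int y)"
    proof (intro conjI ballI)
      show "int y < int (modulus p ex r)" using y(1) by simp
    next
      fix i assume "i \<in> I"
      then have "i \<in> {1..r}" using assms(3) by blast
      then show "[int y = 0] (mod int (p i ^ ex i))" using y(2) `i \<in> I` unfolding u_def
          by (metis cong_int_iff of_nat_0)
    next
      fix i assume "i \<in> {1..r} - I"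
      then show "[int y = 1] (mod int (p i ^ ex i))" using y(2) unfolding u_def
        by (metis DiffE cong_int_iff of_nat_1)
    qed simp
  next
    fix d assume d: "?P d"
    have "nat d = y"
    proof (rule yu)
      show "nat d < modulus p ex r" using d by linarith
      show "\<forall>i\<in>{1..r}. [nat d = u i] (mod p i ^ ex i)"
      proof
        fix i assume i: "i \<in> {1..r}"
        have "[int (nat d) = int (u i)] (mod int (p i ^ ex i))"
          using d i unfolding u_def by (cases "i \<in> I") auto
        then show "[nat d = u i] (mod p i ^ ex i)" using cong_int_iff by blast
      qed
    qed
    then show "d = int y" using d by auto
  qed
  then have "?P (idem p ex r I)" unfolding idem_def by (rule theI')
  then show ?thesis by blast
qed


lemma int_euler:
  fixes b :: int and n :: nat
  assumes "coprime b (int n)"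
  shows "[b ^ totient n = 1] (mod int n)"
proof (cases "n = 0")
  case True then show ?thesis using assms by (simp add: cong_def)
next
  case False
  define a where "a = nat (b mod int n)"
  have ab: "int a = b mod int n" using False unfolding a_def by simp
  have "coprime (b mod int n) (int n)" using assms False by (metis cong_def cong_imp_coprime mod_mod_trivial)
  then have "coprime a n" using ab by (metis coprime_int_iff)
  then have "[a ^ totient n = 1] (mod n)" by (rule euler_theorem)
  then have "[int a ^ totient n = 1] (mod int n)" by (metis cong_int_iff of_nat_1 of_nat_power)
  moreover have "[b = int a] (mod int n)" using ab by (simp add: cong_def)
  ultimately show ?thesis by (meson cong_pow cong_trans)
qed

theorem mainTheorem19:
  fixes p ex :: "nat \<Rightarrow> nat" and r m :: nat and T :: "nat set" and x :: int and e :: nat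
  assumes "r \<ge> 1"
    and "\<forall>i\<in>{1..r}. prime (p i)"
    and "inj_on p {1..r}"
    and "\<forall>i\<in>{1..r}. ex i \<ge> 1"
    and "m = (\<Prod>i\<in>{1..r}. p i ^ ex i)"
    and "T \<subseteq> {1..r}"
    and "gcd x (int (m div (\<Prod>i\<in>T. p i ^ ex i))) = 1"
    and "\<forall>i\<in>{1..r}. ex i \<le> e"
    and "e \<ge> 1"
  shows "let b = (\<Prod>i\<in>T. int (p i)) * x in
    [b ^ e = (\<Sum>i\<in>{1..r} - T. idem p ex r ({1..r} - {i}) * b ^ (e mod totient (p i ^ ex i)))] (mod int m)"
proof -
  define b where "b = (\<Prod>i\<in>T. int (p i)) * x"
  define D where "D i = idem p ex r ({1..r} - {i})" for i
  define S where "S = (\<Sum>i\<in>{1..r} - T. D i * b ^ (e mod totient (p i ^ ex i)))"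
  have cop: "\<forall>i\<in>{1..r}. \<forall>j\<in>{1..r}. i \<noteq> j \<longrightarrow> coprime (int (p i ^ ex i)) (int (p j ^ ex j))"
    using coprime_pp[OF assms(2,3)] by auto
  have Dp: "\<And>i j. i \<in> {1..r} \<Longrightarrow> j \<in> {1..r} \<Longrightarrow>
     [D i = (if i = j then 1 else 0)] (mod int (p j ^ ex j))"
  proof -
    fix i j assume i: "i \<in> {1..r}" and j: "j \<in> {1..r}"
    have "({1..r} - {i}) \<subseteq> {1..r}" by auto
    from idem_props[OF assms(2,3) this, of ex] i j show "?thesis i j"
      unfolding D_def by auto
  qed
  have fin: "finite T" using assms(6) finite_subset by blast
  have mdiv: "m div (\<Prod>i\<in>T. p i ^ ex i) = (\<Prod>i\<in>{1..r} - T. p i ^ ex i)"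
  proof -
    have "m = (\<Prod>i\<in>{1..r} - T. p i ^ ex i) * (\<Prod>i\<in>T. p i ^ ex i)"
      unfolding assms(5) by (rule prod.subset_diff[OF assms(6)]) simp
    moreover have "(\<Prod>i\<in>T. p i ^ ex i) \<noteq> 0" using assms(2,6) fin
      by (auto dest: prime_gt_0_nat)
    ultimately show ?thesis by simp
  qed
  have local: "[b ^ e = S] (mod int (p j ^ ex j))" if j: "j \<in> {1..r}" for j
  proof (cases "j \<in> T")
    case True
    have "int (p j) dvd b" unfolding b_def using dvd_prodI[OF fin True, of "\<lambda>i. int (p i)"] by (rule dvd_mult2)
    then have "int (p j) ^ e dvd b ^ e" by (rule dvd_power_same)
    moreover have "int (p j) ^ ex j dvd int (p j) ^ e" using assms(8) j by (simp add: le_imp_power_dvd)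
    ultimately have "int (p j ^ ex j) dvd b ^ e" by (metis dvd_trans of_nat_power)
    then have 1: "[b ^ e = 0] (mod int (p j ^ ex j))" by (simp add: cong_0_iff)
    have "[S = (\<Sum>i\<in>{1..r} - T. 0 * b ^ (e mod totient (p i ^ ex i)))] (mod int (p j ^ ex j))"
      unfolding S_def
    proof (rule cong_sum, rule cong_mult)
      fix i assume "i \<in> {1..r} - T"
      then show "[D i = 0] (mod int (p j ^ ex j))" using Dp[of i j] j True by (cases "i = j") auto
    qed auto
    then have "[S = 0] (mod int (p j ^ ex j))" by simp
    then show ?thesis using 1 by (meson cong_sym cong_trans)
  next
    case False
    have pj: "prime (int (p j))" using assms(2) j by simp
    have nd1: "\<not> int (p j) dvd (\<Prod>i\<in>T. int (p i))"
    proof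
      assume a: "int (p j) dvd (\<Prod>i\<in>T. int (p i))"
      have "\<exists>i\<in>T. int (p j) dvd int (p i)"
        using iffD1[OF prime_dvd_prod_iff[OF fin pj] a] .
      then obtain i where i: "i \<in> T" "int (p j) dvd int (p i)" by blast
      then have d: "p j dvd p i" by (simp only: of_nat_dvd_iff)
      have pi: "prime (p i)" using i assms(2,6) by blast
      have pj': "prime (p j)" using assms(2) j by blast
      have "p j = p i" using primes_dvd_imp_eq[OF pj' pi d] .
      moreover have "i \<in> {1..r}" using i(1) assms(6) by blast
      ultimately have "j = i" using inj_onD[OF assms(3)] j by blast
      then show False using False i by simp
    qed
    have nd2: "\<not> int (p j) dvd x"
    proof
      assume h: "int (p j) dvd x"
      have "p j dvd (\<Prod>i\<in>{1..r} - T. p i ^ ex i)"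
      proof (rule dvd_trans)
        have "ex j \<ge> 1" using assms(4) j by blast
        then show "p j dvd p j ^ ex j" by (intro dvd_power) simp
        show "p j ^ ex j dvd (\<Prod>i\<in>{1..r} - T. p i ^ ex i)" by (rule dvd_prodI) (use j False in auto)
      qed
      then have "int (p j) dvd int (m div (\<Prod>i\<in>T. p i ^ ex i))" by (simp only: mdiv of_nat_dvd_iff)
      from gcd_greatest[OF h this] have "int (p j) dvd 1" using assms(7) by simp
      then show False using pj by (simp add: prime_int_iff)
    qed
    have "\<not> int (p j) dvd b" unfolding b_def using nd1 nd2 pj by (simp add: prime_dvd_mult_iff)
    then have "coprime (int (p j)) b" using pj by (simp add: prime_imp_coprime)
    then have cb: "coprime b (int (p j ^ ex j))" by (simp add: coprime_commute)
    define t where "t = totient (p j ^ ex j)"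
    have "[b ^ t = 1] (mod int (p j ^ ex j))" unfolding t_def by (rule int_euler[OF cb])
    then have "[(b ^ t) ^ (e div t) * b ^ (e mod t) = 1 ^ (e div t) * b ^ (e mod t)] (mod int (p j ^ ex j))"
      by (intro cong_mult cong_pow) auto
    moreover have "(b ^ t) ^ (e div t) * b ^ (e mod t) = b ^ e"
    proof -
      have "b ^ e = b ^ (t * (e div t) + e mod t)" by simp
      also have "\<dots> = (b ^ t) ^ (e div t) * b ^ (e mod t)" by (simp only: power_add power_mult)
      finally show ?thesis by simp
    qed
    ultimately have 1: "[b ^ e = b ^ (e mod t)] (mod int (p j ^ ex j))" by simp
    have "[S = (\<Sum>i\<in>{1..r} - T. (if i = j then 1 else 0) * b ^ (e mod totient (p i ^ ex i)))] (mod int (p j ^ ex j))"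
      unfolding S_def
    proof (rule cong_sum, rule cong_mult)
      fix i assume "i \<in> {1..r} - T"
      then show "[D i = (if i = j then 1 else 0)] (mod int (p j ^ ex j))" using Dp[of i j] j by auto
    qed auto
    moreover have "(\<Sum>i\<in>{1..r} - T. (if i = j then 1 else 0) * b ^ (e mod totient (p i ^ ex i))) = b ^ (e mod t)"
    proof -
      have "(\<Sum>i\<in>{1..r} - T. (if i = j then 1 else 0) * b ^ (e mod totient (p i ^ ex i)))
          = (\<Sum>i\<in>{1..r} - T. if i = j then b ^ (e mod totient (p i ^ ex i)) else 0)"
        by (rule sum.cong) auto
      also have "\<dots> = b ^ (e mod t)" using j False unfolding t_def by (simp add: sum.delta)
      finally show ?thesis .
    qed
    ultimately have "[S = b ^ (e mod t)] (mod int (p j ^ ex j))" by simp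
    then show ?thesis using 1 by (meson cong_sym cong_trans)
  qed
  have "[b ^ e = S] (mod (\<Prod>i\<in>{1..r}. int (p i ^ ex i)))"
    by (rule cong_cong_prod_coprime) (use local cop in auto)
  then have "[b ^ e = S] (mod int m)" using assms(5) by simp
  then show ?thesis unfolding b_def S_def D_def Let_def by simp
qed

end
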